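(* Assume Schinzel's Hypothesis H. Then $j(a_n)>1$ for infinitely many $n$; equivalently, there are infinitely many $n\ge 2$ such that $a_n-a_{n-1}\notin A$.
   Context: Let $A$ be the set of positive integers $a$ such that $a^2+1$ is prime, and enumerate it in increasing order as $A=\{a_1<a_2<a_3<\cdots\}$ (so $a_1=1,a_2=2,a_3=4,\dots$). For $n\ge 2$, $j(a_n)$ denotes the smallest index $i$ with $1\le i\le n-1$ such that $a_n-a_{n-i}\in A$ (i.e. $a_n-a_{n-i}=a_k$ for some $k$). A finite set of polynomials $f_1,\dots,f_r\in\mathbb{Z}[x]$ satisfies the Bunyakovsky condition if there is no prime $p$ such that $\prod_i f_i(a)\equiv 0 \pmod p$ for all $a\in\mathbb{F}_p$. Schinzel's Hypothesis H: if $f_1,\dots,f_r\in\mathbb{Z}[x]$ are irreducible polynomials with positive leading coefficients satisfying the Bunyakovsky condition, then there are infinitely many positive integers $x$ for which $f_1(x),\dots,f_r(x)$ are all prime. *)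

theory Defs
  imports "HOL-Library.Infinite_Set" "HOL-Computational_Algebra.Polynomial_Factorial"
    "HOL-Computational_Algebra.Primes"
begin

definition setA :: "nat set" where
  "setA = {a. a > 0 \<and> prime (a^2 + 1)}"

text \<open>1-indexed increasing enumeration: a_1 < a_2 < ...\<close>
definition aseq :: "nat \<Rightarrow> nat" where
  "aseq n = enumerate setA (n - 1)"

definition bunyakovsky :: "int poly set \<Rightarrow> bool" where
  "bunyakovsky F \<longleftrightarrow>
     \<not> (\<exists>p::int. prime p \<and> (\<forall>a::int. p dvd (\<Prod>f\<in>F. poly f a)))"

definition hypothesis_H :: bool where
  "hypothesis_H \<longleftrightarrow>
     (\<forall>F::int poly set. finite F \<and> (\<forall>f\<in>F. irreducible f \<and> lead_coeff f > 0) \<and> bunyakovsky F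
        \<longrightarrow> infinite {x::nat. x > 0 \<and> (\<forall>f\<in>F. prime (poly f (int x)))})"

end

theory Submission
  imports Defs
begin

lemma quad_irred:
  fixes f0 f1 f2 u v :: int
  assumes f2: "f2 > 0" and disc: "f1^2 < 4*f0*f2" and bez: "u*f0 + v*f2 = 1"
  shows "irreducible [:f0,f1,f2:]"
proof (rule irreducibleI)
  let ?f = "[:f0,f1,f2:]"
  show "?f \<noteq> 0" using f2 by simp
  have degf: "degree ?f = 2" using f2 by simp
  show "\<not> is_unit ?f"
  proof
    assume "is_unit ?f"
    then obtain c where "?f = [:c:]" by (auto simp: is_unit_poly_iff)
    then show False using degf by (metis degree_pCons_0 zero_neq_numeral)
  qed
  fix a b assume fab: "?f = a * b"
  have a0: "a \<noteq> 0" and b0: "b \<noteq> 0" using fab \<open>?f \<noteq> 0\<close> by auto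
  have dsum: "degree a + degree b = 2" using degree_mult_eq[OF a0 b0] fab degf by simp
  have const: "is_unit p" if dp: "degree p = 0" and fpq: "?f = p * q" for p q :: "int poly"
  proof -
    obtain c where pc: "p = [:c:]" using degree_eq_zeroE[OF dp] by blast
    have "?f = smult c q" using fpq pc by simp
    hence "coeff ?f 0 = c * coeff q 0" "coeff ?f 2 = c * coeff q 2" by simp_all
    hence "f0 = c * coeff q 0" "f2 = c * coeff q 2" by (simp_all add: numeral_2_eq_2)
    hence "c dvd u*f0 + v*f2" by simp
    hence "c dvd 1" using bez by simp
    thus ?thesis using pc by (simp add: is_unit_poly_iff)
  qed
  consider "degree a = 0" | "degree b = 0" | "degree a = 1 \<and> degree b = 1" using dsum by linarith
  then show "is_unit a \<or> is_unit b"
  proof cases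
    case 1 then show ?thesis using const fab by blast
  next
    case 2 then show ?thesis using const fab by (metis mult.commute)
  next
    case 3
    define c0 c1 d0 d1 where "c0 = coeff a 0" "c1 = coeff a 1" "d0 = coeff b 0" "d1 = coeff b 1"
    have c1: "c1 \<noteq> 0" using 3 a0 c0_c1_d0_d1_def(2) by (metis leading_coeff_0_iff)
    have a2: "coeff a 2 = 0" "coeff b 2 = 0" using 3 by (simp_all add: coeff_eq_0)
    have "coeff ?f 0 = coeff (a*b) 0" "coeff ?f 1 = coeff (a*b) 1" "coeff ?f 2 = coeff (a*b) 2"
      using fab by simp_all
    hence e: "f0 = c0*d0" "f1 = c0*d1 + c1*d0" "f2 = c1*d1"
      using a2 by (simp_all add: coeff_mult numeral_2_eq_2 atMost_Suc c0_c1_d0_d1_def)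
    have Q: "f2*c0^2 - f1*c0*c1 + f0*c1^2 = 0" unfolding e by (simp add: algebra_simps power2_eq_square)
    have "4*f2*(f2*c0^2 - f1*c0*c1 + f0*c1^2) = (2*f2*c0 - f1*c1)^2 + (4*f0*f2 - f1^2)*c1^2"
      by (simp add: algebra_simps power2_eq_square)
    moreover have "(4*f0*f2 - f1^2)*c1^2 > 0" using disc c1 by simp
    moreover have "(2*f2*c0 - f1*c1)^2 \<ge> 0" by simp
    ultimately have "4*f2*(f2*c0^2 - f1*c0*c1 + f0*c1^2) > 0" by linarith
    with Q show ?thesis by simp
  qed
qed


lemma not_prime_dvd: "(d::nat) dvd m \<Longrightarrow> 1 < d \<Longrightarrow> d < m \<Longrightarrow> \<not> prime m"
  by (metis less_not_refl prime_nat_iff)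

lemma odd_notA: assumes "odd (z::nat)" "z > 1" shows "z \<notin> setA"
proof -
  obtain k where k: "z = 2*k+1" using assms(1) oddE by blast
  have "z^2 + 1 = 2*(2*k^2+2*k+1)" unfolding k by (simp add: algebra_simps power2_eq_square)
  hence d: "2 dvd z^2+1" by simp
  have l: "2 < z^2+1" using assms(2) le_square[of z] unfolding power2_eq_square by linarith
  have "\<not> prime (z^2+1)" using not_prime_dvd[OF d _ l] by simp
  thus ?thesis unfolding setA_def by auto
qed

lemma gap_notA:
  fixes x z :: nat
  assumes "130*x+66 < z" "z < 130*x+74"
  shows "z \<notin> setA"
proof -
  define k where "k = z - (130*x+66)"
  have k: "z = 130*x+66+k" "1 \<le> k" "k \<le> 7" using assms unfolding k_def by auto
  have ks: "k = 1 \<or> k = 2 \<or> k = 3 \<or> k = 4 \<or> k = 5 \<or> k = 6 \<or> k = 7" using k by auto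
  moreover have "z \<notin> setA" if "odd k"
    using odd_notA[of z] that k by auto
  moreover have "z \<notin> setA" if "k = 2"
  proof -
    have "z^2+1 = 5*(3380*x^2+3536*x+925)" unfolding k that by (simp add: algebra_simps power2_eq_square)
    hence d: "5 dvd z^2+1" by simp
    have l: "5 < z^2+1" using k le_square[of z] unfolding power2_eq_square by linarith
    have "\<not> prime (z^2+1)" using not_prime_dvd[OF d _ l] by simp
    thus ?thesis unfolding setA_def by auto
  qed
  moreover have "z \<notin> setA" if "k = 6"
  proof -
    have "z^2+1 = 5*(3380*x^2+3744*x+1037)" unfolding k that by (simp add: algebra_simps power2_eq_square)
    hence d: "5 dvd z^2+1" by simp
    have l: "5 < z^2+1" using k le_square[of z] unfolding power2_eq_square by linarith
    have "\<not> prime (z^2+1)" using not_prime_dvd[OF d _ l] by simp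
    thus ?thesis unfolding setA_def by auto
  qed
  moreover have "z \<notin> setA" if "k = 4"
  proof -
    have "z^2+1 = 13*(1300*x^2+1400*x+377)" unfolding k that by (simp add: algebra_simps power2_eq_square)
    hence d: "13 dvd z^2+1" by simp
    have l: "13 < z^2+1" using k le_square[of z] unfolding power2_eq_square by linarith
    have "\<not> prime (z^2+1)" using not_prime_dvd[OF d _ l] by simp
    thus ?thesis unfolding setA_def by auto
  qed
  ultimately show ?thesis by auto
qed


lemma eight_notA: "(8::nat) \<notin> setA"
proof -
  have "\<not> prime (65::nat)" using not_prime_dvd[of 5 65] by simp
  thus ?thesis unfolding setA_def by simp
qed

theorem proposition1:
  assumes "hypothesis_H"
  shows "infinite {n::nat. n \<ge> 2 \<and> aseq n - aseq (n - 1) \<notin> setA}"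
proof -
  define P1 :: "int poly" where "P1 = [:4357, 17160, 16900:]"
  define P2 :: "int poly" where "P2 = [:5477, 19240, 16900:]"
  have i1: "irreducible P1" unfolding P1_def
    by (rule quad_irred[where u=4193 and v="-1081"]) simp_all
  have i2: "irreducible P2" unfolding P2_def
    by (rule quad_irred[where u="-7387" and v=2394]) simp_all
  have ne: "P1 \<noteq> P2" unfolding P1_def P2_def by simp
  have bun: "bunyakovsky {P1,P2}"
    unfolding bunyakovsky_def
  proof
    assume "\<exists>p::int. prime p \<and> (\<forall>a. p dvd (\<Prod>f\<in>{P1,P2}. poly f a))"
    then obtain p :: int where p: "prime p" "\<forall>a. p dvd (\<Prod>f\<in>{P1,P2}. poly f a)" by blast
    have h: "p dvd poly P1 0 * poly P2 0" "p dvd poly P1 1 * poly P2 1"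
      using p(2)[rule_format, of 0] p(2)[rule_format, of 1] ne by simp_all
    have "p dvd (-171593553)*(poly P1 0 * poly P2 0) + 2561162*(poly P1 1 * poly P2 1)"
      by (rule dvd_add[OF dvd_mult[OF h(1)] dvd_mult[OF h(2)]])
    also have "\<dots> = 1" unfolding P1_def P2_def by simp
    finally show False using p(1) not_prime_unit by blast
  qed
  define S where "S = {x::nat. x > 0 \<and> (\<forall>f\<in>{P1,P2}. prime (poly f (int x)))}"
  have Sinf: "infinite S" unfolding S_def
  proof (rule assms[unfolded hypothesis_H_def, rule_format, of "{P1,P2}"], intro conjI)
    show "finite {P1,P2}" by simp
    show "\<forall>f\<in>{P1, P2}. irreducible f \<and> 0 < lead_coeff f"
      using i1 i2 unfolding P1_def P2_def by simp
  qed (rule bun)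
  have key: "130*x+66 \<in> setA \<and> 130*x+74 \<in> setA" if "x \<in> S" for x
  proof -
    have e1: "poly P1 (int x) = int ((130*x+66)^2+1)" "poly P2 (int x) = int ((130*x+74)^2+1)"
      unfolding P1_def P2_def by (simp_all add: algebra_simps power2_eq_square)
    have p1: "prime (poly P1 (int x))" "prime (poly P2 (int x))" using that unfolding S_def by auto
    have "prime (int ((130*x+66)^2+1))" "prime (int ((130*x+74)^2+1))"
      using p1 unfolding e1 by simp_all
    hence "prime ((130*x+66)^2+1)" "prime ((130*x+74)^2+1)" by (simp_all only: prime_nat_int_transfer)
    thus ?thesis unfolding setA_def by simp
  qed
  have injf: "inj_on (\<lambda>x::nat. 130*x+74) S" by (rule inj_onI) simp
  have Ainf: "infinite setA"
  proof
    assume "finite setA"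
    moreover have "(\<lambda>x::nat. 130*x+74) ` S \<subseteq> setA" using key by auto
    ultimately have "finite ((\<lambda>x::nat. 130*x+74) ` S)" by (rule finite_subset[rotated])
    with injf Sinf show False using finite_imageD by blast
  qed
  define T where "T = {n::nat. n \<ge> 2 \<and> aseq n - aseq (n - 1) \<notin> setA}"
  have sub: "(\<lambda>x::nat. 130*x+74) ` S \<subseteq> aseq ` T"
  proof
    fix w assume "w \<in> (\<lambda>x::nat. 130*x+74) ` S"
    then obtain x where x: "x \<in> S" "w = 130*x+74" by blast
    obtain k where k: "enumerate setA k = 130*x+66" using enumerate_Ex[OF Ainf] key[OF x(1)] by blast
    obtain m where m: "enumerate setA m = 130*x+74" using enumerate_Ex[OF Ainf] key[OF x(1)] by blast
    have "k < m" using enumerate_mono_iff[OF Ainf, of k m] unfolding k m by simp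
    hence le: "enumerate setA (Suc k) \<le> 130*x+74" using enumerate_mono_le_iff[OF Ainf, of "Suc k" m] unfolding m by simp
    have gt: "enumerate setA (Suc k) > 130*x+66" using k Ainf enumerate_step by metis
    have inA: "enumerate setA (Suc k) \<in> setA" using Ainf enumerate_in_set by blast
    have eq: "enumerate setA (Suc k) = 130*x+74"
    proof (rule ccontr)
      assume "enumerate setA (Suc k) \<noteq> 130*x+74"
      with le have "enumerate setA (Suc k) < 130*x+74" by simp
      with gt gap_notA inA show False by blast
    qed
    have "aseq (k+2) = 130*x+74" "aseq (k+2-1) = 130*x+66" using eq k unfolding aseq_def by simp_all
    hence "k+2 \<in> T" using eight_notA unfolding T_def by simp
    thus "w \<in> aseq ` T" using x(2) \<open>aseq (k+2) = 130*x+74\<close> by (metis image_eqI)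
  qed
  show ?thesis
  proof
    assume "finite {n::nat. n \<ge> 2 \<and> aseq n - aseq (n - 1) \<notin> setA}"
    hence "finite (aseq ` T)" unfolding T_def by simp
    hence "finite ((\<lambda>x::nat. 130*x+74) ` S)" using sub finite_subset by blast
    with injf Sinf show False using finite_imageD by blast
  qed
qed

end
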